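(* Consider the system $x_{k+1}=Ax_k+Bw_k$, $y^i_k=C^ix_k+D^iv^i_k$ ($i\in\mathcal V=\{1,\dots,N\}$) in the noise-free case, i.e. $\underline w=\overline w=0$ and $\underline v^i=\overline v^i=0$ for all $i$ (so $w_k=0$, $v^i_k=0$), and run the DIO (described in the context) with gains $L^i,\Gamma^i$ and $d\in\mathbb N$ network iterations. Then for every $k\ge0$ the collective framer error satisfies $e_{k+1}=H_k\hat A e_k$, where $\hat A=\mathrm{diag}(\hat A^1,\dots,\hat A^N)$, $\hat A^i=\begin{bmatrix}(\tilde A^i)^+ & (\tilde A^i)^-\\ (\tilde A^i)^- & (\tilde A^i)^+\end{bmatrix}$, and $H_k\in\{0,1\}^{2Nn\times 2Nn}$ is the matrix whose row $\underline{\mathrm{id}}(i,s)$ equals $\mathbf e^\top_{\underline{\mathrm{id}}(j^*,s)}$ with $j^*=\min\big(\arg\max_{j\in\mathcal N_i^d}(\underline x^{j,0}_{k+1})_s\big)$, and whose row $\overline{\mathrm{id}}(i,s)$ equals $\mathbf e^\top_{\overline{\mathrm{id}}(j^\dagger,s)}$ with $j^\dagger=\min\big(\arg\min_{j\in\mathcal N_i^d}(\overline x^{j,0}_{k+1})_s\big)$, for all $i\in\mathcal V$, $s\in\{1,\dots,n\}$. Moreover, $H_k\hat A\in\mathcal F$, where $\mathcal F$ is the set of matrices $M\in\mathbb R^{2Nn\times2Nn}$ such that for every $i\in\mathcal V$ and $s\in\{1,\dots,n\}$, row $\underline{\mathrm{id}}(i,s)$ of $M$ equals row $\underline{\mathrm{id}}(j,s)$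 of $\hat A$ for some $j\in\mathcal N_i^d$, and row $\overline{\mathrm{id}}(i,s)$ of $M$ equals row $\overline{\mathrm{id}}(j',s)$ of $\hat A$ for some $j'\in\mathcal N_i^d$ (so $\mathcal F$ has independent row uncertainties).
   Context: Entrywise inequalities, max, min; $M^+_{ij}=\max\{M_{ij},0\}$, $M^-=M^+-M$. $G=(\mathcal V,E)$ is a directed graph, $\mathcal N_i=\{j:(i,j)\in E\}\cup\{i\}$, $\mathcal N_i^d$ is the set of nodes reachable from $i$ by a directed path of length at most $d$ (including $i$). DIO: $T^i=I_n-\Gamma^iC^i$, $\tilde A^i=T^iA-L^iC^i$; initialize $\underline x^i_0=\underline x_0$, $\overline x^i_0=\overline x_0$; for each $k$, each agent computes (noise bounds being zero here) $\underline x^{i,0}_{k+1}=(\tilde A^i)^+\underline x^i_k-(\tilde A^i)^-\overline x^i_k+L^iy^i_k+\Gamma^iy^i_{k+1}$, $\overline x^{i,0}_{k+1}=(\tilde A^i)^+\overline x^i_k-(\tilde A^i)^-\underline x^i_k+L^iy^i_k+\Gamma^iy^i_{k+1}$, and then $\underline x^i_{k+1}=\max_{j\in\mathcal N_i^d}\underline x^{j,0}_{k+1}$, $\overline x^i_{k+1}=\min_{j\in\mathcal N_i^d}\overline x^{j,0}_{k+1}$ (obtained by $d$ rounds of max/min over $\mathcal N_i$). Errors: $\underline e^i_k=x_k-\underline x^i_k$, $\overline e^i_k=\overline x^i_k-x_k$, and $e_k=[(\underline e^1_k)^\top\ (\overline e^1_k)^\top\ \cdots\ (\underline e^N_k)^\top\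 (\overline e^N_k)^\top]^\top\in\mathbb R^{2Nn}$. Indices (1-based): $\underline{\mathrm{id}}(i,s)=2n(i-1)+s$, $\overline{\mathrm{id}}(i,s)=2n(i-1)+n+s$, the positions of $(\underline e^i)_s$ and $(\overline e^i)_s$ in $e$; $\mathbf e_m$ is the $m$-th standard basis vector of $\mathbb R^{2Nn}$. *)

theory Defs
  imports "Jordan_Normal_Form.Matrix"
begin

(* Agents are indexed 0..N-1 and state components 0..n-1 (0-based, shift of the
   paper's 1-based indices). *)

definition pos_part :: "real mat \<Rightarrow> real mat" where
  "pos_part M = map_mat (\<lambda>a. max a 0) M"

definition neg_part :: "real mat \<Rightarrow> real mat" where
  "neg_part M = pos_part M - M"

definition reach :: "(nat \<times> nat) set \<Rightarrow> nat \<Rightarrow> nat \<Rightarrow> nat set" where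
  "reach E d i = {j. \<exists>l\<le>d. (i, j) \<in> E ^^ l}"

(* positions of (lower e^i)_s and (upper e^i)_s in the stacked error (0-based) *)
definition idlo :: "nat \<Rightarrow> nat \<Rightarrow> nat \<Rightarrow> nat" where
  "idlo n i s = 2 * n * i + s"

definition idhi :: "nat \<Rightarrow> nat \<Rightarrow> nat \<Rightarrow> nat" where
  "idhi n i s = 2 * n * i + n + s"

definition argmax_set :: "'a set \<Rightarrow> ('a \<Rightarrow> real) \<Rightarrow> 'a set" where
  "argmax_set S f = {j \<in> S. \<forall>j'\<in>S. f j' \<le> f j}"

definition argmin_set :: "'a set \<Rightarrow> ('a \<Rightarrow> real) \<Rightarrow> 'a set" where
  "argmin_set S f = {j \<in> S. \<forall>j'\<in>S. f j \<le> f j'}"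

definition Atil :: "nat \<Rightarrow> real mat \<Rightarrow> real mat \<Rightarrow> real mat \<Rightarrow> real mat \<Rightarrow> real mat" where
  "Atil n A C L \<Gamma> = (1\<^sub>m n - \<Gamma> * C) * A - L * C"

definition Ahat_blk :: "real mat \<Rightarrow> real mat" where
  "Ahat_blk At = four_block_mat (pos_part At) (neg_part At) (neg_part At) (pos_part At)"

definition err_vec :: "nat \<Rightarrow> nat \<Rightarrow> real vec \<Rightarrow> (nat \<Rightarrow> real vec) \<Rightarrow> (nat \<Rightarrow> real vec) \<Rightarrow> real vec" where
  "err_vec N n x lo hi = vec (2 * N * n) (\<lambda>r.
     let i = r div (2 * n); q = r mod (2 * n) in
     if q < n then x $ q - lo i $ q else hi i $ (q - n) - x $ (q - n))"

definition frF :: "nat \<Rightarrow> nat \<Rightarrow> (nat \<Rightarrow> nat set) \<Rightarrow> real mat \<Rightarrow> real mat set" where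
  "frF N n Nd Ah = {M \<in> carrier_mat (2 * N * n) (2 * N * n).
     \<forall>i<N. \<forall>s<n.
       (\<exists>j\<in>Nd i. row M (idlo n i s) = row Ah (idlo n j s)) \<and>
       (\<exists>j'\<in>Nd i. row M (idhi n i s) = row Ah (idhi n j' s))}"

end

theory Submission
  imports Defs
begin


lemma diag_block_carrier:
  assumes "\<forall>B\<in>set Bs. B \<in> carrier_mat b b"
  shows "diag_block_mat Bs \<in> carrier_mat (b * length Bs) (b * length Bs)"
  using assms by (induct Bs) (auto simp: Let_def)

lemma diag_block_entry:
  assumes "\<forall>B\<in>set Bs. B \<in> carrier_mat b b" "j < length Bs" "a < b" "c < b * length Bs"
  shows "diag_block_mat Bs $$ (b*j + a, c) = (if c div b = j then (Bs!j) $$ (a, c mod b) else 0)"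
  using assms
proof (induct Bs arbitrary: j c)
  case Nil then show ?case by simp
next
  case (Cons B Bs)
  have Bc: "B \<in> carrier_mat b b" using Cons.prems by auto
  have Dc: "diag_block_mat Bs \<in> carrier_mat (b * length Bs) (b * length Bs)"
    using Cons.prems(1) diag_block_carrier[of Bs b] by auto
  show ?case
  proof (cases j)
    case 0
    then show ?thesis using Bc Dc Cons.prems
      by (auto simp: Let_def algebra_simps div_eq_0_iff)
  next
    case (Suc j')
    have r: "b * j + a = b + (b*j' + a)" using Suc by simp
    have j': "j' < length Bs" using Suc Cons.prems by simp
    have rl: "b*j' + a < b * length Bs"
    proof -
      have "b*j' + a < b*j' + b" using Cons.prems by simp
      also have "\<dots> = b * (Suc j')" by simp
      also have "\<dots> \<le> b * length Bs" using j' by (intro mult_le_mono2) simp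
      finally show ?thesis .
    qed
    have "diag_block_mat (B # Bs) $$ (b * j + a, c) = four_block_mat B (0\<^sub>m b (b * length Bs)) (0\<^sub>m (b * length Bs) b)
         (diag_block_mat Bs) $$ (b + (b*j' + a), c)"
      unfolding r diag_block_mat.simps Let_def using Bc Dc by simp
    also have "\<dots> = (if c < b then 0 else diag_block_mat Bs $$ (b*j'+a, c - b))"
      using Bc Dc Cons.prems rl by (subst index_mat_four_block) auto
    also have "\<dots> = (if c div b = j then ((B#Bs)!j) $$ (a, c mod b) else 0)"
    proof (cases "c < b")
      case True then show ?thesis using Suc by auto
    next
      case False
      then have "c - b < b * length Bs" using Cons.prems by auto
      moreover have "(c - b) div b = c div b - 1" using False
        by (simp add: div_if)
      moreover have "(c - b) mod b = c mod b" using False by (simp add: le_mod_geq)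
      moreover have "c div b \<ge> 1" using False Cons.prems(3)
        by (simp add: Suc_le_eq div_greater_zero_iff)
      ultimately show ?thesis using Cons.hyps[of j' "c - b"] Cons.prems Suc False by auto
    qed
    finally show ?thesis .
  qed
qed

lemma diag_block_row_prod:
  assumes "\<forall>B\<in>set Bs. B \<in> carrier_mat b b" "j < length Bs" "a < b"
    and e: "dim_vec e = b * length Bs"
  shows "row (diag_block_mat Bs) (b*j + a) \<bullet> e = (\<Sum>c<b. (Bs!j) $$ (a, c) * e $ (b*j + c))"
proof -
  let ?M = "diag_block_mat Bs"
  have Mc: "?M \<in> carrier_mat (b * length Bs) (b * length Bs)" using diag_block_carrier assms(1) .
  have rl: "b*j + a < b * length Bs"
  proof -
    have "b*j + a < b*j + b" using assms by simp
    also have "\<dots> = b * (Suc j)" by simp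
    also have "\<dots> \<le> b * length Bs" using assms(2) by (intro mult_le_mono2) simp
    finally show ?thesis .
  qed
  have "row ?M (b*j + a) \<bullet> e = (\<Sum>c\<in>{0..<b * length Bs}. ?M $$ (b*j+a, c) * e $ c)"
    unfolding scalar_prod_def e using Mc rl by (intro sum.cong) auto
  also have "\<dots> = (\<Sum>c\<in>{0..<b * length Bs}. if c div b = j then (Bs!j) $$ (a, c mod b) * e $ c else 0)"
    using diag_block_entry[OF assms(1,2,3)] by (intro sum.cong) auto
  also have "\<dots> = (\<Sum>c\<in>{c\<in>{0..<b * length Bs}. c div b = j}. (Bs!j) $$ (a, c mod b) * e $ c)"
    by (rule sum.inter_filter[symmetric]) simp
  also have "{c\<in>{0..<b * length Bs}. c div b = j} = (\<lambda>t. b*j + t) ` {..<b}"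
  proof (rule Set.set_eqI, rule iffI)
    fix c assume "c \<in> {c\<in>{0..<b * length Bs}. c div b = j}"
    then have "c = b*j + c mod b" "c mod b < b" using assms(3)
      by (auto simp: mult.commute)
    then show "c \<in> (\<lambda>t. b*j + t) ` {..<b}" by (metis imageI lessThan_iff)
  next
    fix c assume "c \<in> (\<lambda>t. b*j + t) ` {..<b}"
    then obtain t where t: "t < b" "c = b*j + t" by auto
    have "b*j + t < b*j + b" using t by simp
    also have "\<dots> = b * (Suc j)" by simp
    also have "\<dots> \<le> b * length Bs" using assms(2) by (intro mult_le_mono2) simp
    finally have "c < b * length Bs" using t by simp
    moreover have "c div b = j" using t by simp
    ultimately show "c \<in> {c\<in>{0..<b * length Bs}. c div b = j}" by simp
  qed
  also have "(\<Sum>c\<in>(\<lambda>t. b*j + t) ` {..<b}. (Bs!j) $$ (a, c mod b) * e $ c)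
      = (\<Sum>c<b. (Bs!j) $$ (a, c) * e $ (b*j + c))"
    by (subst sum.reindex) (auto simp: inj_on_def)
  finally show ?thesis .
qed


lemma sum_split2: "(\<Sum>c<2*(n::nat). (f c::real)) = (\<Sum>c<n. f c) + (\<Sum>c<n. f (n + c))"
proof -
  have "{..<2*n} = {..<n} \<union> (\<lambda>c. n + c) ` {..<n}"
  proof (rule Set.set_eqI, rule iffI)
    fix x assume x: "x \<in> {..<2*n}"
    show "x \<in> {..<n} \<union> (\<lambda>c. n + c) ` {..<n}"
    proof (cases "x < n")
      case False
      then have "x = n + (x - n)" "x - n < n" using x by auto
      then show ?thesis by blast
    qed simp
  qed auto
  moreover have "{..<n} \<inter> (\<lambda>c. n + c) ` {..<n} = {}" by auto
  ultimately show ?thesis by (simp add: sum.union_disjoint sum.reindex inj_on_def)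
qed

lemma ahat_lo:
  assumes At: "At \<in> carrier_mat n n" and s: "s < n"
  shows "(\<Sum>c<2*n. Ahat_blk At $$ (s, c) * f c) =
     (\<Sum>c<n. pos_part At $$ (s, c) * f c) + (\<Sum>c<n. neg_part At $$ (s, c) * f (n + c))"
proof -
  have P: "pos_part At \<in> carrier_mat n n" using At by (simp add: pos_part_def)
  have Q: "neg_part At \<in> carrier_mat n n" unfolding neg_part_def using At by (rule minus_carrier_mat)
  show ?thesis unfolding sum_split2 Ahat_blk_def using P Q s by simp
qed

lemma ahat_hi:
  assumes At: "At \<in> carrier_mat n n" and s: "s < n"
  shows "(\<Sum>c<2*n. Ahat_blk At $$ (n + s, c) * f c) =
     (\<Sum>c<n. neg_part At $$ (s, c) * f c) + (\<Sum>c<n. pos_part At $$ (s, c) * f (n + c))"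
proof -
  have P: "pos_part At \<in> carrier_mat n n" using At by (simp add: pos_part_def)
  have Q: "neg_part At \<in> carrier_mat n n" unfolding neg_part_def using At by (rule minus_carrier_mat)
  show ?thesis unfolding sum_split2 Ahat_blk_def using P Q s by simp
qed

lemma mv_comp: "M \<in> carrier_mat n n \<Longrightarrow> v \<in> carrier_vec n \<Longrightarrow> s < n \<Longrightarrow>
   (M *\<^sub>v v) $ s = (\<Sum>c<n. M $$ (s, c) * v $ c)"
  by (auto simp: scalar_prod_def atLeast0LessThan intro!: sum.cong)

lemma err_lo: "i < N \<Longrightarrow> s < n \<Longrightarrow> err_vec N n x lo hi $ (2*n*i + s) = x $ s - lo i $ s"
proof -
  assume a: "i < N" "s < n"
  have "2*n*i + s < 2*n*i + 2*n" using a by simp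
  also have "\<dots> = 2*n*(Suc i)" by simp
  also have "\<dots> \<le> 2*N*n" using a by (metis Suc_leI mult.commute mult_le_mono2 mult.assoc)
  finally have lt: "2*n*i + s < 2*N*n" .
  have "(2*n*i + s) div (2*n) = i" "(2*n*i + s) mod (2*n) = s" using a by auto
  then show ?thesis using lt a unfolding err_vec_def by (simp add: Let_def)
qed

lemma err_hi: "i < N \<Longrightarrow> s < n \<Longrightarrow> err_vec N n x lo hi $ (2*n*i + n + s) = hi i $ s - x $ s"
proof -
  assume a: "i < N" "s < n"
  have "2*n*i + n + s < 2*n*i + 2*n" using a by simp
  also have "\<dots> = 2*n*(Suc i)" by simp
  also have "\<dots> \<le> 2*N*n" using a by (metis Suc_leI mult.commute mult_le_mono2 mult.assoc)
  finally have lt: "2*n*i + n + s < 2*N*n" .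
  have e: "2*n*i + n + s = (n+s) + i*(2*n)" by simp
  have "(2*n*i + n + s) div (2*n) = i" "(2*n*i + n + s) mod (2*n) = n + s" unfolding e using a by simp_all
  then show ?thesis using lt a unfolding err_vec_def by (simp add: Let_def)
qed

lemma id_bounds: "i < N \<Longrightarrow> s < n \<Longrightarrow> idlo n i s < 2*N*n \<and> idhi n i s < 2*N*n"
proof -
  assume a: "i < N" "s < n"
  have "2*n*i + n + s < 2*n*i + 2*n" using a by simp
  also have "\<dots> = 2*n*(Suc i)" by simp
  also have "\<dots> \<le> 2*N*n" using a by (metis Suc_leI mult.commute mult_le_mono2 mult.assoc)
  finally show ?thesis unfolding idlo_def idhi_def by simp
qed

lemma id_decomp: "r < 2*N*n \<Longrightarrow> \<exists>i<N. \<exists>s<n. r = idlo n i s \<or> r = idhi n i s"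
proof -
  assume r: "r < 2*N*n"
  define i where "i = r div (2*n)"
  define q where "q = r mod (2*n)"
  have n: "n > 0" using r by (cases n) auto
  have rq: "r = 2*n*i + q" unfolding i_def q_def by simp
  have q: "q < 2*n" using n unfolding q_def by simp
  have "r < N * (2*n)" using r by (simp add: ac_simps)
  then have i: "i < N" unfolding i_def by (rule less_mult_imp_div_less)
  show ?thesis
  proof (cases "q < n")
    case True then show ?thesis using i rq unfolding idlo_def by blast
  next
    case False
    then have "r = idhi n i (q - n)" "q - n < n" using rq q unfolding idhi_def by auto
    then show ?thesis using i by blast
  qed
qed

lemma reach_sub: assumes "E \<subseteq> {0..<N} \<times> {0..<N}" "i < N"
  shows "reach E d i \<subseteq> {0..<N}" "i \<in> reach E d i" "finite (reach E d i)"
proof -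
  show s: "reach E d i \<subseteq> {0..<N}"
  proof
    fix j assume "j \<in> reach E d i"
    then obtain l where "(i, j) \<in> E ^^ l" unfolding reach_def by auto
    then show "j \<in> {0..<N}" using assms
      by (cases l) (auto simp: relpow.simps)
  qed
  show "i \<in> reach E d i" unfolding reach_def by force
  show "finite (reach E d i)" using s finite_subset by blast
qed

lemma row_unit_mult:
  assumes H: "(H :: real mat) \<in> carrier_mat M M" and Ah: "Ah \<in> carrier_mat M M" and r: "r < M" and t: "t < M"
    and rowH: "row H r = unit_vec M t"
  shows "row (H * Ah) r = row Ah t"
proof (rule eq_vecI)
  show "dim_vec (row (H * Ah) r) = dim_vec (row Ah t)" using H Ah by simp
  fix c assume "c < dim_vec (row Ah t)"
  then have c: "c < M" using Ah by simp
  have cc: "col Ah c \<in> carrier_vec M" using Ah c by (rule col_carrier_vec[rotated])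
  have "row (H * Ah) r $ c = row H r \<bullet> col Ah c"
    unfolding row_mult[OF H Ah r] using c by simp
  also have "\<dots> = unit_vec M t \<bullet> col Ah c" unfolding rowH ..
  also have "\<dots> = col Ah c $ t" by (rule scalar_prod_left_unit[OF cc t])
  also have "\<dots> = row Ah t $ c" using Ah c t by simp
  finally show "row (H * Ah) r $ c = row Ah t $ c" .
qed


lemma argmax_pick:
  assumes "finite S" "S \<noteq> {}"
  shows "Min (argmax_set S f) \<in> S \<and> f (Min (argmax_set S f)) = Max (f ` S)"
proof -
  obtain j where j: "j \<in> S" "f j = Max (f ` S)" using assms
    by (metis (mono_tags, lifting) Max_in finite_imageI image_iff image_is_empty)
  have "j \<in> argmax_set S f" using j assms unfolding argmax_set_def by auto
  then have ne: "argmax_set S f \<noteq> {}" by auto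
  have fin: "finite (argmax_set S f)" using assms(1) unfolding argmax_set_def by auto
  have m: "Min (argmax_set S f) \<in> argmax_set S f" using Min_in[OF fin ne] .
  then have "Min (argmax_set S f) \<in> S" "\<forall>j'\<in>S. f j' \<le> f (Min (argmax_set S f))"
    unfolding argmax_set_def by auto
  moreover have "Max (f ` S) = f (Min (argmax_set S f))"
    using calculation assms by (intro Max_eqI) auto
  ultimately show ?thesis by auto
qed

lemma argmin_pick:
  assumes "finite S" "S \<noteq> {}"
  shows "Min (argmin_set S f) \<in> S \<and> f (Min (argmin_set S f)) = Min (f ` S)"
proof -
  obtain j where j: "j \<in> S" "f j = Min (f ` S)" using assms
    by (metis (mono_tags, lifting) Min_in finite_imageI image_iff image_is_empty)
  have "j \<in> argmin_set S f" using j assms unfolding argmin_set_def by auto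
  then have ne: "argmin_set S f \<noteq> {}" by auto
  have fin: "finite (argmin_set S f)" using assms(1) unfolding argmin_set_def by auto
  have m: "Min (argmin_set S f) \<in> argmin_set S f" using Min_in[OF fin ne] .
  then have "Min (argmin_set S f) \<in> S" "\<forall>j'\<in>S. f (Min (argmin_set S f)) \<le> f j'"
    unfolding argmin_set_def by auto
  moreover have "Min (f ` S) = f (Min (argmin_set S f))"
    using calculation assms by (intro Min_eqI) auto
  ultimately show ?thesis by auto
qed


lemma mat_vec_zero: "B \<in> carrier_mat n m \<Longrightarrow> B *\<^sub>v 0\<^sub>v m = (0\<^sub>v n :: real vec)"
proof (rule eq_vecI)
  assume B: "B \<in> carrier_mat n m"
  fix i assume "i < dim_vec (0\<^sub>v n :: real vec)"
  then have i: "i < n" by simp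
  have r: "row B i \<in> carrier_vec m" using i B by (rule row_carrier_vec)
  show "(B *\<^sub>v 0\<^sub>v m) $ i = (0\<^sub>v n :: real vec) $ i"
    using B i scalar_prod_right_zero[OF r] by simp
next
  assume B: "B \<in> carrier_mat n m"
  show "dim_vec (B *\<^sub>v 0\<^sub>v m) = dim_vec (0\<^sub>v n :: real vec)" using B by simp
qed

theorem lemma2:
  fixes N n m :: nat and p q :: "nat \<Rightarrow> nat"
    and A B :: "real mat" and C D L \<Gamma> :: "nat \<Rightarrow> real mat"
    and x :: "nat \<Rightarrow> real vec" and w :: "nat \<Rightarrow> real vec"
    and v y :: "nat \<Rightarrow> nat \<Rightarrow> real vec"
    and E :: "(nat \<times> nat) set" and d :: nat
    and x0lo x0hi :: "real vec"
    and xlo xhi xlo0 xhi0 :: "nat \<Rightarrow> nat \<Rightarrow> real vec"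
  assumes E: "E \<subseteq> {0..<N} \<times> {0..<N}"
    and A: "A \<in> carrier_mat n n" and B: "B \<in> carrier_mat n m"
    and C: "\<And>i. i < N \<Longrightarrow> C i \<in> carrier_mat (p i) n"
    and D: "\<And>i. i < N \<Longrightarrow> D i \<in> carrier_mat (p i) (q i)"
    and L: "\<And>i. i < N \<Longrightarrow> L i \<in> carrier_mat n (p i)"
    and G: "\<And>i. i < N \<Longrightarrow> \<Gamma> i \<in> carrier_mat n (p i)"
    and x0: "x0lo \<in> carrier_vec n" "x0hi \<in> carrier_vec n" "x 0 \<in> carrier_vec n"
    and x0_bounds: "\<And>s. s < n \<Longrightarrow> x0lo $ s \<le> x 0 $ s \<and> x 0 $ s \<le> x0hi $ s"
    and w0: "\<And>k. w k = 0\<^sub>v m"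
    and v0: "\<And>i k. i < N \<Longrightarrow> v i k = 0\<^sub>v (q i)"
    and sys: "\<And>k. x (Suc k) = A *\<^sub>v x k + B *\<^sub>v w k"
    and meas: "\<And>i k. i < N \<Longrightarrow> y i k = C i *\<^sub>v x k + D i *\<^sub>v v i k"
    and init_lo: "\<And>i. i < N \<Longrightarrow> xlo i 0 = x0lo"
    and init_hi: "\<And>i. i < N \<Longrightarrow> xhi i 0 = x0hi"
    and pre_lo: "\<And>i k. i < N \<Longrightarrow> xlo0 i (Suc k) =
        pos_part (Atil n A (C i) (L i) (\<Gamma> i)) *\<^sub>v xlo i k
        - neg_part (Atil n A (C i) (L i) (\<Gamma> i)) *\<^sub>v xhi i k
        + L i *\<^sub>v y i k + \<Gamma> i *\<^sub>v y i (Suc k)"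
    and pre_hi: "\<And>i k. i < N \<Longrightarrow> xhi0 i (Suc k) =
        pos_part (Atil n A (C i) (L i) (\<Gamma> i)) *\<^sub>v xhi i k
        - neg_part (Atil n A (C i) (L i) (\<Gamma> i)) *\<^sub>v xlo i k
        + L i *\<^sub>v y i k + \<Gamma> i *\<^sub>v y i (Suc k)"
    and upd_lo: "\<And>i k. i < N \<Longrightarrow> xlo i (Suc k) =
        vec n (\<lambda>s. Max ((\<lambda>j. xlo0 j (Suc k) $ s) ` reach E d i))"
    and upd_hi: "\<And>i k. i < N \<Longrightarrow> xhi i (Suc k) =
        vec n (\<lambda>s. Min ((\<lambda>j. xhi0 j (Suc k) $ s) ` reach E d i))"
  shows "\<forall>k H. H \<in> carrier_mat (2 * N * n) (2 * N * n) \<longrightarrow>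
      (\<forall>i<N. \<forall>s<n.
         row H (idlo n i s) = unit_vec (2 * N * n)
           (idlo n (Min (argmax_set (reach E d i) (\<lambda>j. xlo0 j (Suc k) $ s))) s) \<and>
         row H (idhi n i s) = unit_vec (2 * N * n)
           (idhi n (Min (argmin_set (reach E d i) (\<lambda>j. xhi0 j (Suc k) $ s))) s)) \<longrightarrow>
      (let Ah = diag_block_mat (map (\<lambda>i. Ahat_blk (Atil n A (C i) (L i) (\<Gamma> i))) [0..<N]) in
        err_vec N n (x (Suc k)) (\<lambda>i. xlo i (Suc k)) (\<lambda>i. xhi i (Suc k))
          = (H * Ah) *\<^sub>v err_vec N n (x k) (\<lambda>i. xlo i k) (\<lambda>i. xhi i k)
        \<and> H * Ah \<in> frF N n (reach E d) Ah)"
  proof (intro allI impI)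
  fix k and H :: "real mat"
  assume Hc: "H \<in> carrier_mat (2 * N * n) (2 * N * n)"
  assume Hr: "\<forall>i<N. \<forall>s<n.
         row H (idlo n i s) = unit_vec (2 * N * n)
           (idlo n (Min (argmax_set (reach E d i) (\<lambda>j. xlo0 j (Suc k) $ s))) s) \<and>
         row H (idhi n i s) = unit_vec (2 * N * n)
           (idhi n (Min (argmin_set (reach E d i) (\<lambda>j. xhi0 j (Suc k) $ s))) s)"
  define At where "At i = Atil n A (C i) (L i) (\<Gamma> i)" for i
  define P where "P i = pos_part (At i)" for i
  define Q where "Q i = neg_part (At i)" for i
  define Bs where "Bs = map (\<lambda>i. Ahat_blk (At i)) [0..<N]"
  define Ah where "Ah = diag_block_mat Bs"
  define M where "M = 2 * N * n"
  have Atc: "At i \<in> carrier_mat n n" if "i < N" for i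
    unfolding At_def Atil_def by (intro minus_carrier_mat mult_carrier_mat[OF L[OF that] C[OF that]])
  have Pc: "P i \<in> carrier_mat n n" if "i < N" for i
    unfolding P_def pos_part_def using Atc[OF that] by simp
  have Qc: "Q i \<in> carrier_mat n n" if "i < N" for i
    unfolding Q_def neg_part_def using Atc[OF that] by (rule minus_carrier_mat)
  have PQ: "P i - Q i = At i" if "i < N" for i
    using Atc[OF that] Pc[OF that] Qc[OF that]
    by (intro eq_matI) (auto simp: Q_def neg_part_def P_def[symmetric])
  have blk1: "Ahat_blk (At i) \<in> carrier_mat (2*n) (2*n)" if "i < N" for i
    unfolding Ahat_blk_def P_def[symmetric] Q_def[symmetric] mult_2
    using four_block_carrier_mat[OF Pc[OF that] Pc[OF that], of "Q i" "Q i"] .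
  have blkc: "\<forall>B\<in>set Bs. B \<in> carrier_mat (2*n) (2*n)"
    unfolding Bs_def using blk1 by auto
  have lenBs: "length Bs = N" unfolding Bs_def by simp
  have Ahc: "Ah \<in> carrier_mat M M"
    using diag_block_carrier[OF blkc] unfolding Ah_def lenBs M_def by (simp add: ac_simps)
  have B0: "B *\<^sub>v 0\<^sub>v m = 0\<^sub>v n" using B by (rule mat_vec_zero)
  have xc: "x k' \<in> carrier_vec n" for k'
  proof (induct k')
    case 0 then show ?case using x0 by simp
  next
    case (Suc k') then show ?case using sys[of k'] w0[of k'] A B0 by simp
  qed
  have xsuc: "x (Suc k') = A *\<^sub>v x k'" for k'
    using sys[of k'] w0[of k'] A B0 xc[of k'] by simp
  have xlc: "xlo i k' \<in> carrier_vec n" if "i < N" for i k'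
    using that x0 init_lo upd_lo by (cases k') auto
  have xhc: "xhi i k' \<in> carrier_vec n" if "i < N" for i k'
    using that x0 init_hi upd_hi by (cases k') auto
  have yk: "y i k' = C i *\<^sub>v x k'" if "i < N" for i k'
    using meas[OF that, of k'] v0[OF that, of k'] mat_vec_zero[OF D[OF that]] C[OF that] xc[of k'] by simp
  define e where "e = err_vec N n (x k) (\<lambda>i. xlo i k) (\<lambda>i. xhi i k)"
  define e' where "e' = err_vec N n (x (Suc k)) (\<lambda>i. xlo i (Suc k)) (\<lambda>i. xhi i (Suc k))"
  have de: "dim_vec e = 2 * n * length Bs" unfolding e_def err_vec_def lenBs by (simp add: ac_simps)
  have de': "dim_vec e' = M" unfolding e'_def err_vec_def M_def by simp
  have AtX: "At j *\<^sub>v x k = x (Suc k) - \<Gamma> j *\<^sub>v (C j *\<^sub>v x (Suc k)) - L j *\<^sub>v (C j *\<^sub>v x k)"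
    if j: "j < N" for j
  proof -
    have Cc: "C j \<in> carrier_mat (p j) n" using C[OF j] .
    have Gc: "\<Gamma> j \<in> carrier_mat n (p j)" using G[OF j] .
    have Lc: "L j \<in> carrier_mat n (p j)" using L[OF j] .
    have GC: "\<Gamma> j * C j \<in> carrier_mat n n" using Cc Gc by simp
    have IGC: "1\<^sub>m n - \<Gamma> j * C j \<in> carrier_mat n n" using GC by (rule minus_carrier_mat)
    have "At j *\<^sub>v x k = ((1\<^sub>m n - \<Gamma> j * C j) * A - L j * C j) *\<^sub>v x k"
      unfolding At_def Atil_def ..
    also have "\<dots> = ((1\<^sub>m n - \<Gamma> j * C j) * A) *\<^sub>v x k - (L j * C j) *\<^sub>v x k"
      using IGC A Lc Cc xc[of k] by (intro minus_mult_distrib_mat_vec) auto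
    also have "((1\<^sub>m n - \<Gamma> j * C j) * A) *\<^sub>v x k = (1\<^sub>m n - \<Gamma> j * C j) *\<^sub>v (A *\<^sub>v x k)"
      using IGC A xc[of k] by simp
    also have "\<dots> = 1\<^sub>m n *\<^sub>v (A *\<^sub>v x k) - (\<Gamma> j * C j) *\<^sub>v (A *\<^sub>v x k)"
      using GC A xc[of k] by (intro minus_mult_distrib_mat_vec) auto
    also have "\<dots> = x (Suc k) - \<Gamma> j *\<^sub>v (C j *\<^sub>v x (Suc k))"
      using GC Gc Cc A xc[of k] xsuc[of k] by simp
    also have "(L j * C j) *\<^sub>v x k = L j *\<^sub>v (C j *\<^sub>v x k)"
      using Lc Cc xc[of k] by simp
    finally show ?thesis .
  qed
  have keyvec: "x (Suc k) $ s - xlo0 j (Suc k) $ s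
      = (P j *\<^sub>v x k) $ s - (P j *\<^sub>v xlo j k) $ s + (Q j *\<^sub>v xhi j k) $ s - (Q j *\<^sub>v x k) $ s"
    "xhi0 j (Suc k) $ s - x (Suc k) $ s
      = (P j *\<^sub>v xhi j k) $ s - (P j *\<^sub>v x k) $ s + (Q j *\<^sub>v x k) $ s - (Q j *\<^sub>v xlo j k) $ s"
    if j: "j < N" and s: "s < n" for j s
  proof -
    have Cc: "C j \<in> carrier_mat (p j) n" using C[OF j] .
    have Gc: "\<Gamma> j \<in> carrier_mat n (p j)" using G[OF j] .
    have Lc: "L j \<in> carrier_mat n (p j)" using L[OF j] .
    have c1: "xlo0 j (Suc k) $ s = (P j *\<^sub>v xlo j k) $ s - (Q j *\<^sub>v xhi j k) $ s
       + (L j *\<^sub>v (C j *\<^sub>v x k)) $ s + (\<Gamma> j *\<^sub>v (C j *\<^sub>v x (Suc k))) $ s"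
      using pre_lo[OF j, of k] yk[OF j] Pc[OF j] Qc[OF j] Cc Gc Lc s
      unfolding P_def Q_def At_def by simp
    have c1': "xhi0 j (Suc k) $ s = (P j *\<^sub>v xhi j k) $ s - (Q j *\<^sub>v xlo j k) $ s
       + (L j *\<^sub>v (C j *\<^sub>v x k)) $ s + (\<Gamma> j *\<^sub>v (C j *\<^sub>v x (Suc k))) $ s"
      using pre_hi[OF j, of k] yk[OF j] Pc[OF j] Qc[OF j] Cc Gc Lc s
      unfolding P_def Q_def At_def by simp
    have c2: "(At j *\<^sub>v x k) $ s = x (Suc k) $ s - (\<Gamma> j *\<^sub>v (C j *\<^sub>v x (Suc k))) $ s
        - (L j *\<^sub>v (C j *\<^sub>v x k)) $ s"
      using AtX[OF j] Cc Gc Lc s xc[of "Suc k"] xc[of k] by simp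
    have c3: "(At j *\<^sub>v x k) $ s = (P j *\<^sub>v x k) $ s - (Q j *\<^sub>v x k) $ s"
    proof -
      have "At j *\<^sub>v x k = (P j - Q j) *\<^sub>v x k" using PQ[OF j] by simp
      also have "\<dots> = P j *\<^sub>v x k - Q j *\<^sub>v x k"
        using Pc[OF j] Qc[OF j] xc[of k] by (intro minus_mult_distrib_mat_vec) auto
      finally show ?thesis using Pc[OF j] Qc[OF j] s by simp
    qed
    show "x (Suc k) $ s - xlo0 j (Suc k) $ s
      = (P j *\<^sub>v x k) $ s - (P j *\<^sub>v xlo j k) $ s + (Q j *\<^sub>v xhi j k) $ s - (Q j *\<^sub>v x k) $ s"
      using c1 c2 c3 by linarith
    show "xhi0 j (Suc k) $ s - x (Suc k) $ s
      = (P j *\<^sub>v xhi j k) $ s - (P j *\<^sub>v x k) $ s + (Q j *\<^sub>v x k) $ s - (Q j *\<^sub>v xlo j k) $ s"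
      using c1' c2 c3 by linarith
  qed
  have Bsj: "Bs ! j = Ahat_blk (At j)" if "j < N" for j
    unfolding Bs_def using that by simp
  have key_lo: "(Ah *\<^sub>v e) $ idlo n j s = x (Suc k) $ s - xlo0 j (Suc k) $ s"
    if j: "j < N" and s: "s < n" for j s
  proof -
    have "(Ah *\<^sub>v e) $ idlo n j s = row Ah (2*n*j + s) \<bullet> e"
      using id_bounds[OF j s] carrier_matD[OF Ahc] unfolding M_def idlo_def by simp
    also have "\<dots> = (\<Sum>c<2*n. Ahat_blk (At j) $$ (s, c) * e $ (2*n*j + c))"
      unfolding Ah_def using diag_block_row_prod[OF blkc _ _ de, of j s] j s lenBs Bsj[OF j] by simp
    also have "\<dots> = (\<Sum>c<n. P j $$ (s, c) * e $ (2*n*j + c)) + (\<Sum>c<n. Q j $$ (s, c) * e $ (2*n*j + (n + c)))"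
      unfolding P_def Q_def by (rule ahat_lo[OF Atc[OF j] s])
    also have "\<dots> = (\<Sum>c<n. P j $$ (s, c) * (x k $ c - xlo j k $ c)) + (\<Sum>c<n. Q j $$ (s, c) * (xhi j k $ c - x k $ c))"
      unfolding e_def using err_lo[OF j] err_hi[OF j] by (simp add: add.assoc[symmetric])
    also have "\<dots> = (P j *\<^sub>v x k) $ s - (P j *\<^sub>v xlo j k) $ s + (Q j *\<^sub>v xhi j k) $ s - (Q j *\<^sub>v x k) $ s"
      using mv_comp[OF Pc[OF j] _ s] mv_comp[OF Qc[OF j] _ s] xc[of k] xlc[OF j] xhc[OF j]
      by (simp add: right_diff_distrib sum_subtractf)
    finally show ?thesis using keyvec(1)[OF j s] by simp
  qed
  have key_hi: "(Ah *\<^sub>v e) $ idhi n j s = xhi0 j (Suc k) $ s - x (Suc k) $ s"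
    if j: "j < N" and s: "s < n" for j s
  proof -
    have "(Ah *\<^sub>v e) $ idhi n j s = row Ah (2*n*j + (n + s)) \<bullet> e"
      using id_bounds[OF j s] carrier_matD[OF Ahc] unfolding M_def idhi_def by (simp add: add.assoc)
    also have "\<dots> = (\<Sum>c<2*n. Ahat_blk (At j) $$ (n + s, c) * e $ (2*n*j + c))"
      unfolding Ah_def using diag_block_row_prod[OF blkc _ _ de, of j "n + s"] j s lenBs Bsj[OF j] by simp
    also have "\<dots> = (\<Sum>c<n. Q j $$ (s, c) * e $ (2*n*j + c)) + (\<Sum>c<n. P j $$ (s, c) * e $ (2*n*j + (n + c)))"
      unfolding P_def Q_def by (rule ahat_hi[OF Atc[OF j] s])
    also have "\<dots> = (\<Sum>c<n. Q j $$ (s, c) * (x k $ c - xlo j k $ c)) + (\<Sum>c<n. P j $$ (s, c) * (xhi j k $ c - x k $ c))"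
      unfolding e_def using err_lo[OF j] err_hi[OF j] by (simp add: add.assoc[symmetric])
    also have "\<dots> = (P j *\<^sub>v xhi j k) $ s - (P j *\<^sub>v x k) $ s + (Q j *\<^sub>v x k) $ s - (Q j *\<^sub>v xlo j k) $ s"
      using mv_comp[OF Pc[OF j] _ s] mv_comp[OF Qc[OF j] _ s] xc[of k] xlc[OF j] xhc[OF j]
      by (simp add: right_diff_distrib sum_subtractf)
    finally show ?thesis using keyvec(2)[OF j s] by simp
  qed
  have HAc: "H * Ah \<in> carrier_mat M M" using Hc Ahc unfolding M_def by simp
  have pick_lo: "\<exists>jl\<in>reach E d i. row (H * Ah) (idlo n i s) = row Ah (idlo n jl s)
        \<and> e' $ idlo n i s = ((H * Ah) *\<^sub>v e) $ idlo n i s"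
    if i: "i < N" and s: "s < n" for i s
  proof -
    let ?S = "reach E d i"
    let ?f = "\<lambda>j. xlo0 j (Suc k) $ s"
    define jl where "jl = Min (argmax_set ?S ?f)"
    have fin: "finite ?S" and ne: "?S \<noteq> {}" using reach_sub[OF E i, where d=d] by auto
    have jlS: "jl \<in> ?S" and fj: "?f jl = Max (?f ` ?S)"
      using argmax_pick[OF fin ne, of ?f] unfolding jl_def by auto
    have jl: "jl < N" using jlS reach_sub[OF E i, where d=d] by auto
    have rH: "row H (idlo n i s) = unit_vec M (idlo n jl s)"
      using Hr i s unfolding jl_def M_def by auto
    have rr: "row (H * Ah) (idlo n i s) = row Ah (idlo n jl s)"
      using row_unit_mult[OF Hc[folded M_def] Ahc _ _ rH] id_bounds[OF i s] id_bounds[OF jl s]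
      unfolding M_def by simp
    have "((H * Ah) *\<^sub>v e) $ idlo n i s = row (H * Ah) (idlo n i s) \<bullet> e"
      using carrier_matD[OF HAc] id_bounds[OF i s] unfolding M_def by simp
    also have "\<dots> = (Ah *\<^sub>v e) $ idlo n jl s"
      using rr carrier_matD[OF Ahc] id_bounds[OF jl s] unfolding M_def by simp
    also have "\<dots> = x (Suc k) $ s - xlo0 jl (Suc k) $ s" by (rule key_lo[OF jl s])
    also have "\<dots> = e' $ idlo n i s"
      unfolding e'_def idlo_def using err_lo[OF i s] upd_lo[OF i, of k] s fj by simp
    finally show ?thesis using jlS rr by auto
  qed
  have pick_hi: "\<exists>jl\<in>reach E d i. row (H * Ah) (idhi n i s) = row Ah (idhi n jl s)
        \<and> e' $ idhi n i s = ((H * Ah) *\<^sub>v e) $ idhi n i s"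
    if i: "i < N" and s: "s < n" for i s
  proof -
    let ?S = "reach E d i"
    let ?f = "\<lambda>j. xhi0 j (Suc k) $ s"
    define jl where "jl = Min (argmin_set ?S ?f)"
    have fin: "finite ?S" and ne: "?S \<noteq> {}" using reach_sub[OF E i, where d=d] by auto
    have jlS: "jl \<in> ?S" and fj: "?f jl = Min (?f ` ?S)"
      using argmin_pick[OF fin ne, of ?f] unfolding jl_def by auto
    have jl: "jl < N" using jlS reach_sub[OF E i, where d=d] by auto
    have rH: "row H (idhi n i s) = unit_vec M (idhi n jl s)"
      using Hr i s unfolding jl_def M_def by auto
    have rr: "row (H * Ah) (idhi n i s) = row Ah (idhi n jl s)"
      using row_unit_mult[OF Hc[folded M_def] Ahc _ _ rH] id_bounds[OF i s] id_bounds[OF jl s]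
      unfolding M_def by simp
    have "((H * Ah) *\<^sub>v e) $ idhi n i s = row (H * Ah) (idhi n i s) \<bullet> e"
      using carrier_matD[OF HAc] id_bounds[OF i s] unfolding M_def by simp
    also have "\<dots> = (Ah *\<^sub>v e) $ idhi n jl s"
      using rr carrier_matD[OF Ahc] id_bounds[OF jl s] unfolding M_def by simp
    also have "\<dots> = xhi0 jl (Suc k) $ s - x (Suc k) $ s" by (rule key_hi[OF jl s])
    also have "\<dots> = e' $ idhi n i s"
      unfolding e'_def idhi_def using err_hi[OF i s] upd_hi[OF i, of k] s fj by simp
    finally show ?thesis using jlS rr by auto
  qed
  have AhE: "diag_block_mat (map (\<lambda>i. Ahat_blk (Atil n A (C i) (L i) (\<Gamma> i))) [0..<N]) = Ah"
    unfolding Ah_def Bs_def At_def ..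
  have eq: "e' = (H * Ah) *\<^sub>v e"
  proof (rule eq_vecI)
    show "dim_vec e' = dim_vec ((H * Ah) *\<^sub>v e)" using de' carrier_matD[OF HAc] by simp
    fix r assume "r < dim_vec ((H * Ah) *\<^sub>v e)"
    then have "r < 2 * N * n" using carrier_matD[OF HAc] unfolding M_def by simp
    then obtain i s where "i < N" "s < n" "r = idlo n i s \<or> r = idhi n i s"
      using id_decomp by blast
    then show "e' $ r = ((H * Ah) *\<^sub>v e) $ r" using pick_lo pick_hi by metis
  qed
  have inF: "H * Ah \<in> frF N n (reach E d) Ah"
    unfolding frF_def using HAc pick_lo pick_hi unfolding M_def by auto
  show "let Ah = diag_block_mat (map (\<lambda>i. Ahat_blk (Atil n A (C i) (L i) (\<Gamma> i))) [0..<N]) in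
        err_vec N n (x (Suc k)) (\<lambda>i. xlo i (Suc k)) (\<lambda>i. xhi i (Suc k))
          = (H * Ah) *\<^sub>v err_vec N n (x k) (\<lambda>i. xlo i k) (\<lambda>i. xhi i k)
        \<and> H * Ah \<in> frF N n (reach E d) Ah"
    unfolding AhE Let_def e_def[symmetric] e'_def[symmetric] using eq inF by simp
qed

end
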